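(* Let $\mathcal{M}$ be a matroid on $[m]$ with base polytope $P$, let $x_0\in P$, and let $\hat x=\chi(S)$ be the (random) extreme point of $P$ output by randomized pipage rounding started at $x_0$. Let $f:2^{[m]}\to\mathbb{R}$ be non-negative, monotone non-decreasing and submodular with marginals $f(T\cup\{i\})-f(T)\in[0,1]$, let $F(x)=\mathbb{E}_{X\sim\mathcal{D}(x)}[f(X)]$ be its multilinear extension, and let $\mu=F(x_0)$. Then for every $\delta\in[0,1)$, \[ \Pr\big[f(S)\le(1-\delta)\mu\big]\le \exp(-\delta^2\mu/2). \]
   Context: The base polytope of a matroid is the convex hull of the characteristic vectors $\chi(B)\in\{0,1\}^m$ of its bases. For $x\in[0,1]^m$, $\mathcal{D}(x)$ is the product distribution on $\{0,1\}^m$ (identified with subsets of $[m]$) with $\Pr[X_i=1]=x_i$ independently. Randomized pipage rounding started at $x_0\in P$: set $p=x_0$; while $p$ is not an extreme point of $P$, choose distinct $a,b\in[m]$ such that $p+z(e_a-e_b)\in P$ for all $z$ in some open neighborhood of $0$ (such $a,b$ exist whenever $p$ is not extreme), let $\ell=\min\{z: p+z(e_a-e_b)\in P\}<0<u=\max\{z:p+z(e_a-e_b)\in P\}$, and replace $p$ by $p+\ell(e_a-e_b)$ with probability $u/(u-\ell)$ and by $p+u(e_a-e_b)$ with probability $-\ell/(u-\ell)$ (independently of the past given the current state); output the final extreme point. The choice of $a,b$ may be arbitrary (subject to the stated condition). *)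

theory Defs
  imports "HOL-Analysis.Analysis" "HOL-Probability.Probability"
begin

text \<open>Matroid on the finite ground set UNIV :: 'n set (which plays the role of [m]),
  given by its family of bases (basis exchange axiom).\<close>
definition matroid_bases :: "('n::finite) set set \<Rightarrow> bool" where
  "matroid_bases Bs \<longleftrightarrow> Bs \<noteq> {} \<and>
     (\<forall>B1\<in>Bs. \<forall>B2\<in>Bs. \<forall>x\<in>B1 - B2. \<exists>y\<in>B2 - B1. insert y (B1 - {x}) \<in> Bs)"

definition chi :: "('n::finite) set \<Rightarrow> real ^ 'n" where
  "chi S = (\<chi> i. if i \<in> S then 1 else 0)"

definition base_polytope :: "('n::finite) set set \<Rightarrow> (real ^ 'n) set" where
  "base_polytope Bs = convex hull (chi ` Bs)"

definition prod_dist :: "real ^ ('n::finite) \<Rightarrow> 'n set pmf" where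
  "prod_dist x = map_pmf (\<lambda>X. {i. X i}) (Pi_pmf UNIV False (\<lambda>i. bernoulli_pmf (x $ i)))"

definition multilinear_ext :: "(('n::finite) set \<Rightarrow> real) \<Rightarrow> real ^ 'n \<Rightarrow> real" where
  "multilinear_ext f x = measure_pmf.expectation (prod_dist x) f"

definition admissible_pair :: "(real ^ ('n::finite)) set \<Rightarrow> real ^ 'n \<Rightarrow> 'n \<Rightarrow> 'n \<Rightarrow> bool" where
  "admissible_pair P p a b \<longleftrightarrow> a \<noteq> b \<and>
     (\<exists>e>0. \<forall>z. \<bar>z\<bar> < e \<longrightarrow> p + z *\<^sub>R (axis a 1 - axis b 1) \<in> P)"

text \<open>The state is the history of points
  (most recent first); the pair (a,b) is chosen by an arbitrary strategy sg that may
  depend on the whole history.\<close>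
definition pipage_step ::
  "(real ^ ('n::finite)) set \<Rightarrow> ((real ^ 'n) list \<Rightarrow> 'n \<times> 'n) \<Rightarrow> (real ^ 'n) list \<Rightarrow> (real ^ 'n) list pmf" where
  "pipage_step P sg h =
     (let p = hd h in
      if p extreme_point_of P then return_pmf h
      else (let a = fst (sg h); b = snd (sg h);
                d = axis a 1 - axis b 1;
                l = Inf {z. p + z *\<^sub>R d \<in> P};
                u = Sup {z. p + z *\<^sub>R d \<in> P}
            in map_pmf (\<lambda>c. (if c then p + l *\<^sub>R d else p + u *\<^sub>R d) # h)
                 (bernoulli_pmf (u / (u - l)))))"

definition pipage_run ::
  "(real ^ ('n::finite)) set \<Rightarrow> ((real ^ 'n) list \<Rightarrow> 'n \<times> 'n) \<Rightarrow> real ^ 'n \<Rightarrow> nat \<Rightarrow> (real ^ 'n) list pmf" where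
  "pipage_run P sg x0 n = ((\<lambda>M. bind_pmf M (pipage_step P sg)) ^^ n) (return_pmf [x0])"

end

theory Submission
  imports Defs
begin

definition wt :: "'a set \<Rightarrow> ('a \<Rightarrow> real) \<Rightarrow> 'a set \<Rightarrow> real" where
  "wt I x A = (\<Prod>i\<in>A. x i) * (\<Prod>i\<in>I-A. 1 - x i)"

definition EE :: "'a set \<Rightarrow> ('a \<Rightarrow> real) \<Rightarrow> ('a set \<Rightarrow> real) \<Rightarrow> real" where
  "EE I x g = (\<Sum>A\<in>Pow I. wt I x A * g A)"

lemma EE_empty[simp]: "EE {} x g = g {}"
  by (simp add: EE_def wt_def)

lemma EE_insert:
  assumes "finite I" "i \<notin> I"
  shows "EE (insert i I) x g = (1 - x i) * EE I x g + x i * EE I x (\<lambda>A. g (insert i A))"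
proof -
  have inj: "inj_on (insert i) (Pow I)" using assms(2) unfolding inj_on_def by (metis Pow_iff insert_ident subsetD)
  have disj: "Pow I \<inter> insert i ` Pow I = {}" using assms(2) by auto
  have w0: "wt (insert i I) x A = (1 - x i) * wt I x A" if "A \<subseteq> I" for A
  proof -
    have "insert i I - A = insert i (I - A)" using that assms(2) by auto
    moreover have "finite (I - A)" using assms(1) by auto
    ultimately show ?thesis using assms(2) by (simp add: wt_def)
  qed
  have w1: "wt (insert i I) x (insert i A) = x i * wt I x A" if "A \<subseteq> I" for A
  proof -
    have "insert i I - insert i A = I - A" using that assms(2) by auto
    moreover have "finite A" using that assms(1) finite_subset by auto
    moreover have "i \<notin> A" using that assms(2) by auto
    ultimately show ?thesis by (simp add: wt_def)
  qed
  have "EE (insert i I) x g = (\<Sum>A\<in>Pow I. wt (insert i I) x A * g A) + (\<Sum>A\<in>insert i ` Pow I. wt (insert i I) x A * g A)"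
    unfolding EE_def Pow_insert using assms(1) disj by (intro sum.union_disjoint) auto
  also have "(\<Sum>A\<in>insert i ` Pow I. wt (insert i I) x A * g A) = (\<Sum>A\<in>Pow I. wt (insert i I) x (insert i A) * g (insert i A))"
    using inj by (simp add: sum.reindex)
  also have "\<dots> = x i * EE I x (\<lambda>A. g (insert i A))"
    unfolding EE_def sum_distrib_left by (intro sum.cong) (auto simp: w1)
  also have "(\<Sum>A\<in>Pow I. wt (insert i I) x A * g A) = (1 - x i) * EE I x g"
    unfolding EE_def sum_distrib_left by (intro sum.cong) (auto simp: w0)
  finally show ?thesis .
qed

lemma EE_cong_x: "(\<And>i. i \<in> I \<Longrightarrow> x i = y i) \<Longrightarrow> EE I x g = EE I y g"
  unfolding EE_def wt_def
  by (intro sum.cong refl arg_cong2[where f="(*)"] prod.cong) auto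

lemma EE_cong_g: "(\<And>A. A \<subseteq> I \<Longrightarrow> g A = h A) \<Longrightarrow> EE I x g = EE I x h"
  unfolding EE_def by (intro sum.cong) auto

lemma wt_nonneg: "(\<And>i. i \<in> I \<Longrightarrow> 0 \<le> x i \<and> x i \<le> 1) \<Longrightarrow> A \<subseteq> I \<Longrightarrow> 0 \<le> wt I x A"
  unfolding wt_def by (intro mult_nonneg_nonneg prod_nonneg) auto

lemma EE_mono: "(\<And>i. i \<in> I \<Longrightarrow> 0 \<le> x i \<and> x i \<le> 1) \<Longrightarrow> (\<And>A. A \<subseteq> I \<Longrightarrow> g A \<le> h A) \<Longrightarrow> EE I x g \<le> EE I x h"
  unfolding EE_def by (intro sum_mono mult_left_mono) (auto intro: wt_nonneg)

lemma EE_nonneg: "(\<And>i. i \<in> I \<Longrightarrow> 0 \<le> x i \<and> x i \<le> 1) \<Longrightarrow> (\<And>A. A \<subseteq> I \<Longrightarrow> 0 \<le> g A) \<Longrightarrow> 0 \<le> EE I x g"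
  using EE_mono[of I x "\<lambda>_. 0" g] by (simp add: EE_def)

lemma EE_add: "EE I x (\<lambda>A. g A + h A) = EE I x g + EE I x h"
  unfolding EE_def by (simp add: algebra_simps sum.distrib)
lemma EE_diff: "EE I x (\<lambda>A. g A - h A) = EE I x g - EE I x h"
  unfolding EE_def by (simp add: algebra_simps sum_subtractf)
lemma EE_cmult: "EE I x (\<lambda>A. c * g A) = c * EE I x g"
  unfolding EE_def by (simp add: algebra_simps sum_distrib_left)

lemma EE_one: "finite I \<Longrightarrow> EE I x (\<lambda>_. 1) = 1"
  by (induction I rule: finite_induct) (auto simp: EE_insert algebra_simps)

lemma EE_const: "finite I \<Longrightarrow> EE I x (\<lambda>_. c) = c"
  using EE_cmult[of I x c "\<lambda>_. 1"] EE_one by (metis mult.right_neutral)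

lemma EE_point:
  assumes "finite I" "\<And>i. x i = (if i \<in> B then 1 else 0)"
  shows "EE I x g = g (B \<inter> I)"
  using assms(1)
proof (induction I arbitrary: g rule: finite_induct)
  case empty then show ?case by simp
next
  case (insert i I)
  show ?case
  proof (cases "i \<in> B")
    case True
    then have "B \<inter> insert i I = insert i (B \<inter> I)" by auto
    then show ?thesis using insert True by (simp add: EE_insert assms(2))
  next
    case False
    then have "B \<inter> insert i I = B \<inter> I" by auto
    then show ?thesis using insert False by (simp add: EE_insert assms(2))
  qed
qed

lemma harris:
  assumes "finite I" "\<And>i. i \<in> I \<Longrightarrow> 0 \<le> x i \<and> x i \<le> 1"
    and "\<And>A B. A \<subseteq> B \<Longrightarrow> g A \<le> g B" "\<And>A B. A \<subseteq> B \<Longrightarrow> h B \<le> h A"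
  shows "EE I x (\<lambda>A. g A * h A) \<le> EE I x g * EE I x h"
  using assms
proof (induction I arbitrary: g h rule: finite_induct)
  case empty then show ?case by simp
next
  case (insert i I)
  let ?q = "x i"
  have q: "0 \<le> ?q" "?q \<le> 1" using insert.prems by auto
  have xI: "\<And>j. j \<in> I \<Longrightarrow> 0 \<le> x j \<and> x j \<le> 1" using insert.prems by auto
  define g1 where "g1 = (\<lambda>A. g (insert i A))"
  define h1 where "h1 = (\<lambda>A. h (insert i A))"
  have m1: "EE I x (\<lambda>A. g A * h A) \<le> EE I x g * EE I x h"
    using insert.IH[OF xI] insert.prems by blast
  have m2: "EE I x (\<lambda>A. g1 A * h1 A) \<le> EE I x g1 * EE I x h1"
  proof (rule insert.IH[OF xI])
    show "\<And>A B. A \<subseteq> B \<Longrightarrow> g1 A \<le> g1 B" unfolding g1_def by (rule insert.prems(2)) blast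
    show "\<And>A B. A \<subseteq> B \<Longrightarrow> h1 B \<le> h1 A" unfolding h1_def by (rule insert.prems(3)) blast
  qed
  have d1: "EE I x g \<le> EE I x g1"
    unfolding g1_def by (rule EE_mono, rule xI, assumption, rule insert.prems(2), blast)
  have d2: "EE I x h1 \<le> EE I x h"
    unfolding h1_def by (rule EE_mono, rule xI, assumption, rule insert.prems(3), blast)
  have "EE (insert i I) x (\<lambda>A. g A * h A) = (1 - ?q) * EE I x (\<lambda>A. g A * h A) + ?q * EE I x (\<lambda>A. g1 A * h1 A)"
    using insert.hyps by (simp add: EE_insert g1_def h1_def)
  also have "\<dots> \<le> (1 - ?q) * (EE I x g * EE I x h) + ?q * (EE I x g1 * EE I x h1)"
    using m1 m2 q by (intro add_mono mult_left_mono) auto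
  also have "\<dots> \<le> ((1 - ?q) * EE I x g + ?q * EE I x g1) * ((1 - ?q) * EE I x h + ?q * EE I x h1)"
  proof -
    have "0 \<le> ?q * (1 - ?q) * ((EE I x g1 - EE I x g) * (EE I x h - EE I x h1))"
      using q d1 d2 by (intro mult_nonneg_nonneg) auto
    then show ?thesis by (simp add: algebra_simps)
  qed
  also have "\<dots> = EE (insert i I) x g * EE (insert i I) x h"
    using insert.hyps by (simp add: EE_insert g1_def h1_def)
  finally show ?case .
qed


lemma exp_chord:
  fixes lam y :: real
  assumes "0 \<le> y" "y \<le> 1"
  shows "exp (- lam * y) \<le> 1 + (exp (- lam) - 1) * y"
proof -
  have "exp ((1 - y) *\<^sub>R 0 + y *\<^sub>R (- lam)) \<le> (1 - y) * exp 0 + y * exp (- lam)"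
    using assms by (intro convex_onD[OF exp_convex]) auto
  then show ?thesis by (simp add: algebra_simps)
qed

lemma chernoff_prod:
  fixes f :: "'a set \<Rightarrow> real" and lam :: real
  assumes "finite I" "\<And>i. i \<in> I \<Longrightarrow> 0 \<le> x i \<and> x i \<le> 1"
    and fnn: "\<And>S. f S \<ge> 0"
    and fmono: "\<And>S T. S \<subseteq> T \<Longrightarrow> f S \<le> f T"
    and fsub: "\<And>S T. f (S \<union> T) + f (S \<inter> T) \<le> f S + f T"
    and fmarg: "\<And>T i. 0 \<le> f (insert i T) - f T \<and> f (insert i T) - f T \<le> 1"
    and lam: "0 \<le> lam"
  shows "EE I x (\<lambda>A. exp (- lam * f A)) \<le> exp ((exp (- lam) - 1) * EE I x f)"
  using assms(1,2)
proof (induction I rule: finite_induct)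
  case empty
  have "exp (- lam) \<ge> 1 + (- lam)" by (rule exp_ge_add_one_self)
  then have "- lam * f {} \<le> (exp (- lam) - 1) * f {}"
    using fnn[of "{}"] by (intro mult_right_mono) auto
  then show ?case by simp
next
  case (insert i I)
  let ?q = "x i"
  let ?c = "exp (- lam) - 1"
  have q: "0 \<le> ?q" "?q \<le> 1" using insert.prems by auto
  have xI: "\<And>j. j \<in> I \<Longrightarrow> 0 \<le> x j \<and> x j \<le> 1" using insert.prems by auto
  define m where "m = (\<lambda>A. f (insert i A) - f A)"
  define G0 where "G0 = EE I x (\<lambda>A. exp (- lam * f A))"
  have G0: "G0 \<le> exp (?c * EE I x f)" using insert.IH[OF xI] by (simp add: G0_def)
  have G0nn: "0 \<le> G0" unfolding G0_def by (rule EE_nonneg, rule xI, assumption) simp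
  have manti: "m B \<le> m A" if "A \<subseteq> B" for A B
  proof (cases "i \<in> B")
    case True
    then have "m B = 0" by (simp add: m_def insert_absorb)
    then show ?thesis using fmarg[of i A] by (simp add: m_def)
  next
    case False
    have "insert i A \<union> B = insert i B" "insert i A \<inter> B = A" using that False by auto
    then show ?thesis using fsub[of "insert i A" B] by (simp add: m_def)
  qed
  have split: "exp (- lam * f (insert i A)) = exp (- lam * m A) * exp (- lam * f A)" for A
    by (simp add: m_def exp_add[symmetric] algebra_simps)
  have h1: "EE I x (\<lambda>A. exp (- lam * f (insert i A))) \<le> EE I x (\<lambda>A. exp (- lam * m A)) * G0"
    unfolding split G0_def
  proof (rule harris[OF insert.hyps(1) xI])
    show "exp (- lam * m A) \<le> exp (- lam * m B)" if "A \<subseteq> B" for A B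
      using manti[OF that] lam by (simp add: mult_left_mono)
    show "exp (- lam * f B) \<le> exp (- lam * f A)" if "A \<subseteq> B" for A B
      using fmono[OF that] lam by (simp add: mult_left_mono)
  qed
  have h2: "EE I x (\<lambda>A. exp (- lam * m A)) \<le> EE I x (\<lambda>A. 1 + ?c * m A)"
    by (rule EE_mono, rule xI, assumption, rule exp_chord) (use fmarg in \<open>auto simp: m_def\<close>)
  have h3: "EE I x (\<lambda>A. 1 + ?c * m A) = 1 + ?c * (EE I x (\<lambda>A. f (insert i A)) - EE I x f)"
    using insert.hyps(1) by (simp add: EE_add EE_cmult EE_one m_def EE_diff)
  define D where "D = EE I x (\<lambda>A. f (insert i A)) - EE I x f"
  have "EE (insert i I) x (\<lambda>A. exp (- lam * f A)) = (1 - ?q) * G0 + ?q * EE I x (\<lambda>A. exp (- lam * f (insert i A)))"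
    using insert.hyps by (simp add: EE_insert G0_def)
  also have "\<dots> \<le> (1 - ?q) * G0 + ?q * ((1 + ?c * D) * G0)"
    using h1 h2 h3 G0nn q unfolding D_def by (intro add_left_mono mult_left_mono order.trans[OF h1] mult_right_mono) auto
  also have "\<dots> = G0 * (1 + ?q * ?c * D)" by (simp add: algebra_simps)
  also have "\<dots> \<le> G0 * exp (?q * ?c * D)"
    using G0nn by (intro mult_left_mono) (simp_all add: add.commute)
  also have "\<dots> \<le> exp (?c * EE I x f) * exp (?q * ?c * D)"
    using G0 by (intro mult_right_mono) auto
  also have "\<dots> = exp (?c * EE (insert i I) x f)"
    using insert.hyps by (simp add: EE_insert D_def exp_add[symmetric] algebra_simps)
  finally show ?case .
qed


lemma expectation_prod_dist:
  fixes x :: "real ^ ('n::finite)"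
  assumes "\<And>i. 0 \<le> x $ i \<and> x $ i \<le> 1"
  shows "measure_pmf.expectation (prod_dist x) g = EE UNIV (($) x) g"
proof -
  have "measure_pmf.expectation (prod_dist x) g
      = measure_pmf.expectation (Pi_pmf UNIV False (\<lambda>i. bernoulli_pmf (x $ i))) (\<lambda>X. g {i. X i})"
    by (simp add: prod_dist_def)
  also have "\<dots> = (\<Sum>X\<in>UNIV. pmf (Pi_pmf UNIV False (\<lambda>i. bernoulli_pmf (x $ i))) X *\<^sub>R g {i. X i})"
    by (rule integral_measure_pmf) auto
  also have "\<dots> = (\<Sum>X\<in>UNIV. (\<Prod>i\<in>UNIV. if X i then x $ i else 1 - x $ i) * g {i. X i})"
    by (intro sum.cong refl arg_cong2[where f="(*\<^sub>R)"], subst pmf_Pi') (auto intro!: prod.cong simp: assms)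
  also have "\<dots> = (\<Sum>A\<in>Pow UNIV. wt UNIV (($) x) A * g A)"
  proof -
    have W: "(\<Prod>i\<in>UNIV. if i \<in> A then x $ i else 1 - x $ i) = wt UNIV (($) x) A" for A :: "'n set"
      unfolding wt_def by (subst prod.If_cases) (auto simp: Compl_eq_Diff_UNIV)
    have W': "(\<Prod>i\<in>UNIV. if X i then x $ i else 1 - x $ i) = wt UNIV (($) x) (Collect X)" for X :: "'n \<Rightarrow> bool"
      using W[of "Collect X"] by simp
    show ?thesis
      by (rule sum.reindex_bij_witness[where i="\<lambda>A i. i \<in> A" and j="\<lambda>X. {i. X i}"]) (auto simp: W')
  qed
  finally show ?thesis by (simp add: EE_def)
qed

lemma EE_split2:
  fixes x :: "'n::finite \<Rightarrow> real"
  assumes "a \<noteq> b"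
  shows "EE UNIV x g = (1 - x a) * ((1 - x b) * EE (UNIV - {a, b}) x g + x b * EE (UNIV - {a, b}) x (\<lambda>A. g (insert b A)))
     + x a * ((1 - x b) * EE (UNIV - {a, b}) x (\<lambda>A. g (insert a A)) + x b * EE (UNIV - {a, b}) x (\<lambda>A. g (insert a (insert b A))))"
proof -
  let ?J = "UNIV - {a, b}"
  have U: "(UNIV :: 'n set) = insert a (insert b ?J)" by auto
  have "EE UNIV x g = EE (insert a (insert b ?J)) x g" using U by simp
  also have "\<dots> = (1 - x a) * EE (insert b ?J) x g + x a * EE (insert b ?J) x (\<lambda>A. g (insert a A))"
    by (rule EE_insert) (use assms in auto)
  also have "EE (insert b ?J) x g = (1 - x b) * EE ?J x g + x b * EE ?J x (\<lambda>A. g (insert b A))"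
    by (rule EE_insert) auto
  also have "EE (insert b ?J) x (\<lambda>A. g (insert a A)) = (1 - x b) * EE ?J x (\<lambda>A. g (insert a A)) + x b * EE ?J x (\<lambda>A. g (insert a (insert b A)))"
    by (rule EE_insert) auto
  finally show ?thesis .
qed


lemma h_supermod:
  fixes f :: "'a set \<Rightarrow> real"
  assumes "a \<noteq> b" "0 \<le> lam"
    and fmono: "\<And>S T. S \<subseteq> T \<Longrightarrow> f S \<le> f T"
    and fsub: "\<And>S T. f (S \<union> T) + f (S \<inter> T) \<le> f S + f T"
  shows "0 \<le> exp (- lam * f (insert a (insert b R))) - exp (- lam * f (insert a R))
             - exp (- lam * f (insert b R)) + exp (- lam * f R)"
proof -
  define F0 where "F0 = f R"
  define Fa where "Fa = f (insert a R)"
  define Fb where "Fb = f (insert b R)"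
  define Fab where "Fab = f (insert a (insert b R))"
  have "insert a R \<union> insert b R = insert a (insert b R)" "insert a R \<inter> insert b R = R" using assms(1) by auto
  then have sub: "Fab + F0 \<le> Fa + Fb" using fsub[of "insert a R" "insert b R"] by (simp add: F0_def Fa_def Fb_def Fab_def)
  have ma: "F0 \<le> Fa" and mb: "F0 \<le> Fb" unfolding F0_def Fa_def Fb_def by (auto intro: fmono)
  define \<alpha> where "\<alpha> = exp (- lam * (Fa - F0))"
  define \<beta> where "\<beta> = exp (- lam * (Fb - F0))"
  have a1: "\<alpha> \<le> 1" unfolding \<alpha>_def using ma assms(2) by (simp add: mult_nonneg_nonneg)
  have b1: "\<beta> \<le> 1" unfolding \<beta>_def using mb assms(2) by (simp add: mult_nonneg_nonneg)
  have ea: "exp (- lam * Fa) = exp (- lam * F0) * \<alpha>" unfolding \<alpha>_def by (simp add: exp_add[symmetric] algebra_simps)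
  have eb: "exp (- lam * Fb) = exp (- lam * F0) * \<beta>" unfolding \<beta>_def by (simp add: exp_add[symmetric] algebra_simps)
  have X1: "exp (- lam * (Fa + Fb - F0)) \<le> exp (- lam * Fab)"
    using sub assms(2) by (simp add: mult_left_mono)
  have X2: "exp (- lam * (Fa + Fb - F0)) = exp (- lam * F0) * \<alpha> * \<beta>"
    unfolding \<alpha>_def \<beta>_def by (simp add: exp_add[symmetric] algebra_simps)
  have "0 \<le> exp (- lam * F0) * ((1 - \<alpha>) * (1 - \<beta>))" using a1 b1 by simp
  then have Y: "0 \<le> exp (- lam * F0) - exp (- lam * F0) * \<alpha> - exp (- lam * F0) * \<beta> + exp (- lam * F0) * \<alpha> * \<beta>"
    by (simp add: algebra_simps)
  show ?thesis
    unfolding F0_def[symmetric] Fa_def[symmetric] Fb_def[symmetric] Fab_def[symmetric] ea eb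
    using X1 X2 Y by linarith
qed

lemma quad_step:
  fixes l u S Q0 c1 :: real
  assumes "l < 0" "0 < u" "0 \<le> S" "\<And>z. Q z = Q0 + c1 * z - S * z\<^sup>2"
  shows "u / (u - l) * Q l + (1 - u / (u - l)) * Q u \<le> Q 0"
proof -
  have ne: "u - l > 0" using assms by simp
  have e1: "u / (u - l) * l + (1 - u / (u - l)) * u = 0"
    using ne by (simp add: field_simps)
  have p1: "0 \<le> u / (u - l)" "u / (u - l) \<le> 1" using ne assms by (auto simp: field_simps)
  define pi where "pi = u / (u - l)"
  have "pi * Q l + (1 - pi) * Q u
      = Q0 + c1 * (pi * l + (1 - pi) * u) - S * (pi * l\<^sup>2 + (1 - pi) * u\<^sup>2)"
    by (simp add: assms(4) algebra_simps)
  also have "\<dots> \<le> Q0" using e1 p1 assms(3) unfolding pi_def[symmetric] by (simp add: mult_nonneg_nonneg)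
  finally show ?thesis using assms(4)[of 0] by (simp add: pi_def)
qed

lemma line_EE:
  fixes p :: "real ^ ('n::finite)"
  assumes "a \<noteq> b"
  defines "J \<equiv> UNIV - {a, b}"
  shows "EE UNIV (($) (p + z *\<^sub>R (axis a 1 - axis b 1))) g =
     (1 - (p$a + z)) * ((1 - (p$b - z)) * EE J (($) p) g + (p$b - z) * EE J (($) p) (\<lambda>A. g (insert b A)))
     + (p$a + z) * ((1 - (p$b - z)) * EE J (($) p) (\<lambda>A. g (insert a A)) + (p$b - z) * EE J (($) p) (\<lambda>A. g (insert a (insert b A))))"
proof -
  let ?y = "p + z *\<^sub>R (axis a 1 - axis b 1)"
  have ya: "?y $ a = p $ a + z" and yb: "?y $ b = p $ b - z" using assms(1) by (auto simp: axis_def)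
  have yJ: "\<And>i. i \<in> J \<Longrightarrow> ?y $ i = p $ i" by (auto simp: J_def axis_def)
  have c: "EE J (($) ?y) h = EE J (($) p) h" for h by (rule EE_cong_x) (use yJ in auto)
  show ?thesis unfolding EE_split2[OF assms(1)] J_def[symmetric] c ya yb ..
qed


lemma G_step:
  fixes p :: "real ^ ('n::finite)" and f :: "'n set \<Rightarrow> real"
  assumes "a \<noteq> b" "\<And>i. 0 \<le> p $ i \<and> p $ i \<le> 1" "l < 0" "0 < u" "0 \<le> lam"
    and fmono: "\<And>S T. S \<subseteq> T \<Longrightarrow> f S \<le> f T"
    and fsub: "\<And>S T. f (S \<union> T) + f (S \<inter> T) \<le> f S + f T"
  shows "u / (u - l) * EE UNIV (($) (p + l *\<^sub>R (axis a 1 - axis b 1))) (\<lambda>A. exp (- lam * f A))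
       + (1 - u / (u - l)) * EE UNIV (($) (p + u *\<^sub>R (axis a 1 - axis b 1))) (\<lambda>A. exp (- lam * f A))
       \<le> EE UNIV (($) p) (\<lambda>A. exp (- lam * f A))"
proof -
  define J where "J = UNIV - {a, b}"
  define h where "h = (\<lambda>A. exp (- lam * f A))"
  define E0 where "E0 = EE J (($) p) h"
  define Ea where "Ea = EE J (($) p) (\<lambda>A. h (insert a A))"
  define Eb where "Eb = EE J (($) p) (\<lambda>A. h (insert b A))"
  define Eab where "Eab = EE J (($) p) (\<lambda>A. h (insert a (insert b A)))"
  define Q where "Q = (\<lambda>z. EE UNIV (($) (p + z *\<^sub>R (axis a 1 - axis b 1))) h)"
  have Qz: "Q z = (1 - (p$a + z)) * ((1 - (p$b - z)) * E0 + (p$b - z) * Eb)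
     + (p$a + z) * ((1 - (p$b - z)) * Ea + (p$b - z) * Eab)" for z
    unfolding Q_def E0_def Ea_def Eb_def Eab_def J_def by (rule line_EE[OF assms(1)])
  define S where "S = Eab - Ea - Eb + E0"
  define c1 where "c1 = (p$b - p$a) * E0 - (p$b + 1 - p$a) * Eb + (1 - p$b + p$a) * Ea + (p$b - p$a) * Eab"
  have Qform: "Q z = Q 0 + c1 * z - S * z\<^sup>2" for z
    unfolding Qz S_def c1_def by (simp add: algebra_simps power2_eq_square)
  have "S = EE J (($) p) (\<lambda>A. h (insert a (insert b A)) - h (insert a A) - h (insert b A) + h A)"
    unfolding S_def E0_def Ea_def Eb_def Eab_def by (simp add: EE_add EE_diff)
  also have "0 \<le> \<dots>"
    unfolding h_def by (rule EE_nonneg, use assms in simp, rule h_supermod[OF assms(1,5) fmono fsub])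
  finally have S0: "0 \<le> S" .
  have "u / (u - l) * Q l + (1 - u / (u - l)) * Q u \<le> Q 0"
    by (rule quad_step[OF assms(3,4) S0 Qform])
  then show ?thesis by (simp add: Q_def h_def)
qed


lemma P_box:
  fixes p :: "real ^ ('n::finite)"
  assumes "p \<in> base_polytope Bs"
  shows "0 \<le> p $ i \<and> p $ i \<le> 1"
proof -
  let ?B = "{q :: real ^ 'n. \<forall>i. 0 \<le> q $ i \<and> q $ i \<le> 1}"
  have cv: "convex ?B"
    unfolding convex_def
  proof (intro ballI allI impI, safe)
    fix x y :: "real ^ 'n" and u v :: real and i
    assume x: "\<forall>i. 0 \<le> x $ i \<and> x $ i \<le> 1" and y: "\<forall>i. 0 \<le> y $ i \<and> y $ i \<le> 1"
      and uv: "0 \<le> u" "0 \<le> v" "u + v = 1"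
    show "0 \<le> (u *\<^sub>R x + v *\<^sub>R y) $ i" using x y uv by simp
    have "u * x $ i + v * y $ i \<le> u * 1 + v * 1"
      using x y uv by (intro add_mono mult_left_mono) auto
    then show "(u *\<^sub>R x + v *\<^sub>R y) $ i \<le> 1" using uv by simp
  qed
  have "chi ` Bs \<subseteq> ?B" by (auto simp: chi_def)
  then have "base_polytope Bs \<subseteq> ?B" unfolding base_polytope_def by (rule hull_minimal) (rule cv)
  then show ?thesis using assms by blast
qed

lemma P_compact: "compact (base_polytope (Bs :: ('n::finite) set set))"
  unfolding base_polytope_def
  by (rule finite_imp_compact_convex_hull) (rule finite_imageI, rule finite_subset[OF subset_UNIV], simp)

definition Gf :: "(('n::finite) set \<Rightarrow> real) \<Rightarrow> real \<Rightarrow> real ^ 'n \<Rightarrow> real" where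
  "Gf f lam p = EE UNIV (($) p) (\<lambda>A. exp (- lam * f A))"

lemma Gf_nonneg: "p \<in> base_polytope Bs \<Longrightarrow> 0 \<le> Gf f lam p"
  unfolding Gf_def by (rule EE_nonneg) (auto dest: P_box)

lemma step_lemma:
  fixes Bs :: "('n::finite) set set" and f :: "'n set \<Rightarrow> real"
  assumes hP: "hd h \<in> base_polytope Bs"
    and adm: "\<not> (hd h extreme_point_of base_polytope Bs) \<Longrightarrow>
           admissible_pair (base_polytope Bs) (hd h) (fst (sg h)) (snd (sg h))"
    and lam: "0 \<le> lam"
    and fmono: "\<And>S T. S \<subseteq> T \<Longrightarrow> f S \<le> f T"
    and fsub: "\<And>S T. f (S \<union> T) + f (S \<inter> T) \<le> f S + f T"
  shows "(\<forall>h'\<in>set_pmf (pipage_step (base_polytope Bs) sg h). hd h' \<in> base_polytope Bs) \<and>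
         (\<integral>\<^sup>+h'. ennreal (Gf f lam (hd h')) \<partial>pipage_step (base_polytope Bs) sg h) \<le> ennreal (Gf f lam (hd h))"
proof (cases "hd h extreme_point_of base_polytope Bs")
  case True
  then show ?thesis using hP by (simp add: pipage_step_def)
next
  case False
  let ?P = "base_polytope Bs"
  define p where "p = hd h"
  define a where "a = fst (sg h)"
  define b where "b = snd (sg h)"
  define d where "d = (axis a 1 - axis b 1 :: real ^ 'n)"
  define T where "T = {z. p + z *\<^sub>R d \<in> ?P}"
  define l where "l = Inf T"
  define u where "u = Sup T"
  from adm[OF False] have ab: "a \<noteq> b" and "\<exists>e>0. \<forall>z. \<bar>z\<bar> < e \<longrightarrow> p + z *\<^sub>R d \<in> ?P"
    unfolding admissible_pair_def a_def b_def p_def d_def by auto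
  then obtain e where e: "e > 0" "\<And>z. \<bar>z\<bar> < e \<Longrightarrow> p + z *\<^sub>R d \<in> ?P" by blast
  have pbox: "\<And>i. 0 \<le> p $ i \<and> p $ i \<le> 1" using hP P_box unfolding p_def by blast
  have da: "(p + z *\<^sub>R d) $ a = p $ a + z" for z using ab by (simp add: d_def axis_def)
  have Tb: "-1 \<le> z \<and> z \<le> 1" if "z \<in> T" for z
    using P_box[of "p + z *\<^sub>R d" Bs a] that pbox[of a] unfolding T_def da by auto
  have Tcl: "closed T"
    unfolding T_def
  proof -
    have "closed ((\<lambda>z. p + z *\<^sub>R d) -` ?P)"
      by (rule continuous_closed_vimage[OF compact_imp_closed[OF P_compact]]) (intro continuous_intros)
    then show "closed {z. p + z *\<^sub>R d \<in> ?P}" by (simp add: vimage_def)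
  qed
  have e2: "e/2 \<in> T" "-(e/2) \<in> T" unfolding T_def using e(2)[of "e/2"] e(2)[of "-(e/2)"] e(1) by auto
  have bb: "bdd_below T" "bdd_above T" using Tb by (auto intro!: bdd_belowI bdd_aboveI)
  have lT: "l \<in> T" unfolding l_def using closed_contains_Inf[OF _ bb(1) Tcl] e2 by auto
  have uT: "u \<in> T" unfolding u_def using closed_contains_Sup[OF _ bb(2) Tcl] e2 by auto
  have l0: "l < 0" using cInf_lower[OF e2(2) bb(1)] e unfolding l_def by simp
  have u0: "0 < u" using cSup_upper[OF e2(1) bb(2)] e unfolding u_def by simp
  have step: "pipage_step ?P sg h = map_pmf (\<lambda>c. (if c then p + l *\<^sub>R d else p + u *\<^sub>R d) # h) (bernoulli_pmf (u / (u - l)))"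
    using False unfolding pipage_step_def Let_def p_def[symmetric] a_def[symmetric] b_def[symmetric] d_def[symmetric]
      T_def[symmetric] l_def[symmetric] u_def[symmetric] by simp
  have pi: "0 \<le> u / (u - l)" "u / (u - l) \<le> 1" using l0 u0 by (auto simp: field_simps)
  have lP: "p + l *\<^sub>R d \<in> ?P" and uP: "p + u *\<^sub>R d \<in> ?P" using lT uT unfolding T_def by auto
  have G: "u / (u - l) * Gf f lam (p + l *\<^sub>R d) + (1 - u / (u - l)) * Gf f lam (p + u *\<^sub>R d) \<le> Gf f lam p"
    unfolding Gf_def d_def by (rule G_step[OF ab pbox l0 u0 lam fmono fsub])
  have n1: "0 \<le> Gf f lam (p + l *\<^sub>R d)" "0 \<le> Gf f lam (p + u *\<^sub>R d)" using lP uP by (auto intro: Gf_nonneg)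
  have "(\<integral>\<^sup>+h'. ennreal (Gf f lam (hd h')) \<partial>pipage_step ?P sg h)
      = ennreal (Gf f lam (p + l *\<^sub>R d)) * ennreal (u / (u - l)) + ennreal (Gf f lam (p + u *\<^sub>R d)) * ennreal (1 - u / (u - l))"
    unfolding step using pi by simp
  also have "\<dots> = ennreal (u / (u - l) * Gf f lam (p + l *\<^sub>R d) + (1 - u / (u - l)) * Gf f lam (p + u *\<^sub>R d))"
  proof -
    define pp where "pp = u / (u - l)"
    define x1 where "x1 = Gf f lam (p + l *\<^sub>R d)"
    define x2 where "x2 = Gf f lam (p + u *\<^sub>R d)"
    have q: "0 \<le> pp" "0 \<le> 1 - pp" "0 \<le> x1" "0 \<le> x2" using pi n1 unfolding pp_def x1_def x2_def by auto
    have "ennreal x1 * ennreal pp + ennreal x2 * ennreal (1 - pp) = ennreal (pp * x1) + ennreal ((1 - pp) * x2)"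
      using q by (simp add: ennreal_mult[symmetric] mult.commute)
    also have "\<dots> = ennreal (pp * x1 + (1 - pp) * x2)" using q by (subst ennreal_plus) auto
    finally show ?thesis unfolding pp_def x1_def x2_def .
  qed
  also have "\<dots> \<le> ennreal (Gf f lam p)" using G by (rule ennreal_leI)
  finally have I: "(\<integral>\<^sup>+h'. ennreal (Gf f lam (hd h')) \<partial>pipage_step ?P sg h) \<le> ennreal (Gf f lam (hd h))"
    by (simp add: p_def)
  have S: "\<forall>h'\<in>set_pmf (pipage_step ?P sg h). hd h' \<in> ?P"
    unfolding step using lP uP by auto
  show ?thesis using I S by blast
qed


lemma ln_ineq:
  fixes \<delta> :: real
  assumes "0 \<le> \<delta>" "\<delta> < 1"
  shows "- \<delta> + \<delta>\<^sup>2 / 2 \<le> (1 - \<delta>) * ln (1 - \<delta>)"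
proof -
  define g where "g = (\<lambda>t::real. (1 - t) * ln (1 - t) + t - t\<^sup>2 / 2)"
  have "g 0 \<le> g \<delta>"
  proof (rule deriv_nonneg_imp_mono[where g=g and a=0 and b=\<delta> and g' = "\<lambda>t. - ln (1 - t) - t"])
    fix t assume t: "t \<in> {0..\<delta>}"
    then have t1: "1 - t > 0" using assms by auto
    have "((\<lambda>t::real. (1 - t) * ln (1 - t) + t - t\<^sup>2 / 2) has_real_derivative - ln (1 - t) - t) (at t)"
      using t1 by (auto intro!: derivative_eq_intros)
    then show "(g has_real_derivative - ln (1 - t) - t) (at t)" by (simp add: g_def)
    have "ln (1 - t) \<le> (1 - t) - 1" by (rule ln_le_minus_one) (use t1 in auto)
    then show "0 \<le> - ln (1 - t) - t" by simp
  qed (use assms in auto)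
  then show ?thesis by (simp add: g_def)
qed

lemma final_real:
  fixes \<delta> \<mu> :: real
  assumes "0 \<le> \<delta>" "\<delta> < 1" "0 \<le> \<mu>"
  shows "exp (- ln (1 - \<delta>) * (1 - \<delta>) * \<mu>) * exp ((exp (- (- ln (1 - \<delta>))) - 1) * \<mu>) \<le> exp (- (\<delta>\<^sup>2 * \<mu> / 2))"
proof -
  have e: "exp (- (- ln (1 - \<delta>))) = 1 - \<delta>" using assms by simp
  have "\<mu> * (- \<delta> + \<delta>\<^sup>2 / 2) \<le> \<mu> * ((1 - \<delta>) * ln (1 - \<delta>))"
    using ln_ineq[OF assms(1,2)] assms(3) by (intro mult_left_mono) auto
  then have "- ln (1 - \<delta>) * (1 - \<delta>) * \<mu> + ((1 - \<delta>) - 1) * \<mu> \<le> - (\<delta>\<^sup>2 * \<mu> / 2)"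
    by (simp add: algebra_simps)
  then show ?thesis unfolding e exp_add[symmetric] by simp
qed


lemma pipage_run_Suc: "pipage_run P sg x0 (Suc N) = bind_pmf (pipage_run P sg x0 N) (pipage_step P sg)"
  by (simp add: pipage_run_def)

lemma run_lemma:
  fixes Bs :: "('n::finite) set set" and f :: "'n set \<Rightarrow> real"
  assumes x0: "x0 \<in> base_polytope Bs"
    and adm: "\<And>h. hd h \<in> base_polytope Bs \<Longrightarrow> \<not> (hd h extreme_point_of base_polytope Bs) \<Longrightarrow>
           admissible_pair (base_polytope Bs) (hd h) (fst (sg h)) (snd (sg h))"
    and lam: "0 \<le> lam"
    and fmono: "\<And>S T. S \<subseteq> T \<Longrightarrow> f S \<le> f T"
    and fsub: "\<And>S T. f (S \<union> T) + f (S \<inter> T) \<le> f S + f T"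
  shows "(\<forall>h\<in>set_pmf (pipage_run (base_polytope Bs) sg x0 N). hd h \<in> base_polytope Bs) \<and>
         (\<integral>\<^sup>+h. ennreal (Gf f lam (hd h)) \<partial>pipage_run (base_polytope Bs) sg x0 N) \<le> ennreal (Gf f lam x0)"
proof (induction N)
  case 0
  then show ?case using x0 by (simp add: pipage_run_def)
next
  case (Suc N)
  let ?R = "pipage_run (base_polytope Bs) sg x0 N"
  have SL: "\<And>h. h \<in> set_pmf ?R \<Longrightarrow>
      (\<forall>h'\<in>set_pmf (pipage_step (base_polytope Bs) sg h). hd h' \<in> base_polytope Bs) \<and>
      (\<integral>\<^sup>+h'. ennreal (Gf f lam (hd h')) \<partial>pipage_step (base_polytope Bs) sg h) \<le> ennreal (Gf f lam (hd h))"
    using Suc.IH by (intro step_lemma adm lam fmono fsub) auto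
  have "(\<integral>\<^sup>+h. ennreal (Gf f lam (hd h)) \<partial>pipage_run (base_polytope Bs) sg x0 (Suc N))
      = (\<integral>\<^sup>+h. (\<integral>\<^sup>+h'. ennreal (Gf f lam (hd h')) \<partial>pipage_step (base_polytope Bs) sg h) \<partial>?R)"
    by (simp add: pipage_run_Suc)
  also have "\<dots> \<le> (\<integral>\<^sup>+h. ennreal (Gf f lam (hd h)) \<partial>?R)"
    by (intro nn_integral_mono_AE AE_pmfI) (use SL in blast)
  also have "\<dots> \<le> ennreal (Gf f lam x0)" using Suc.IH by blast
  finally show ?case using SL by (auto simp: pipage_run_Suc)
qed

theorem corollary3p4:
  fixes Bs :: "('n::finite) set set"
    and f :: "'n set \<Rightarrow> real"
    and x0 :: "real ^ 'n"
    and sg :: "(real ^ 'n) list \<Rightarrow> 'n \<times> 'n"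
    and \<delta> :: real
    and N :: nat
  assumes "matroid_bases Bs"
    and "x0 \<in> base_polytope Bs"
    and "\<And>h. hd h \<in> base_polytope Bs \<Longrightarrow> \<not> (hd h extreme_point_of base_polytope Bs) \<Longrightarrow>
           admissible_pair (base_polytope Bs) (hd h) (fst (sg h)) (snd (sg h))"
    and "\<And>S. f S \<ge> 0"
    and "\<And>S T. S \<subseteq> T \<Longrightarrow> f S \<le> f T"
    and "\<And>S T. f (S \<union> T) + f (S \<inter> T) \<le> f S + f T"
    and "\<And>T i. 0 \<le> f (insert i T) - f T \<and> f (insert i T) - f T \<le> 1"
    and "0 \<le> \<delta>" and "\<delta> < 1"
  shows "measure_pmf.prob (pipage_run (base_polytope Bs) sg x0 N)
           {h. hd h extreme_point_of base_polytope Bs \<and>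
               f {i. hd h $ i = 1} \<le> (1 - \<delta>) * multilinear_ext f x0}
         \<le> exp (- (\<delta>\<^sup>2 * multilinear_ext f x0 / 2))"
proof -
  let ?P = "base_polytope Bs"
  let ?R = "pipage_run ?P sg x0 N"
  define \<mu> where "\<mu> = multilinear_ext f x0"
  define lam where "lam = - ln (1 - \<delta>)"
  define K where "K = exp (lam * (1 - \<delta>) * \<mu>)"
  define E where "E = {h. hd h extreme_point_of ?P \<and> f {i. hd h $ i = 1} \<le> (1 - \<delta>) * \<mu>}"
  have x0box: "\<And>i. 0 \<le> x0 $ i \<and> x0 $ i \<le> 1" using P_box assms(2) by blast
  have mu: "\<mu> = EE UNIV (($) x0) f" unfolding \<mu>_def multilinear_ext_def by (rule expectation_prod_dist[OF x0box])
  have mu0: "0 \<le> \<mu>" unfolding mu by (rule EE_nonneg) (use x0box assms(4) in auto)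
  have lam0: "0 \<le> lam" unfolding lam_def using assms(8,9) by simp
  have RL: "(\<forall>h\<in>set_pmf ?R. hd h \<in> ?P) \<and> (\<integral>\<^sup>+h. ennreal (Gf f lam (hd h)) \<partial>?R) \<le> ennreal (Gf f lam x0)"
    by (rule run_lemma[OF assms(2) assms(3) lam0 assms(5) assms(6)])
  have K0: "0 \<le> K" unfolding K_def by simp
  have pt: "indicator E h \<le> ennreal K * ennreal (Gf f lam (hd h))" if "h \<in> set_pmf ?R" for h
  proof (cases "h \<in> E")
    case True
    then have ext: "hd h extreme_point_of ?P" and fle: "f {i. hd h $ i = 1} \<le> (1 - \<delta>) * \<mu>"
      unfolding E_def by auto
    from extreme_point_of_convex_hull[OF ext[unfolded base_polytope_def]]
    obtain B where B: "hd h = chi B" by auto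
    have cB: "{i. chi B $ i = 1} = B" by (auto simp: chi_def)
    have GB: "Gf f lam (chi B) = exp (- lam * f B)"
      unfolding Gf_def by (subst EE_point[where B=B]) (auto simp: chi_def)
    have "lam * f B \<le> lam * ((1 - \<delta>) * \<mu>)" using fle lam0 unfolding B cB by (intro mult_left_mono) auto
    then have "1 \<le> K * Gf f lam (hd h)" unfolding B GB K_def
      by (simp add: exp_add[symmetric] algebra_simps)
    then have "ennreal 1 \<le> ennreal (K * Gf f lam (hd h))" by (rule ennreal_leI)
    then have "1 \<le> ennreal (K * Gf f lam (hd h))" by simp
    then show ?thesis using True K0 by (simp add: ennreal_mult'[symmetric])
  next
    case False
    then show ?thesis by simp
  qed
  have "emeasure ?R E = (\<integral>\<^sup>+h. indicator E h \<partial>?R)" by simp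
  also have "\<dots> \<le> (\<integral>\<^sup>+h. ennreal K * ennreal (Gf f lam (hd h)) \<partial>?R)"
    by (intro nn_integral_mono_AE AE_pmfI pt)
  also have "\<dots> = ennreal K * (\<integral>\<^sup>+h. ennreal (Gf f lam (hd h)) \<partial>?R)"
    by (rule nn_integral_cmult) simp
  also have "\<dots> \<le> ennreal K * ennreal (Gf f lam x0)"
    using RL by (intro mult_left_mono) auto
  also have "\<dots> = ennreal (K * Gf f lam x0)" using K0 by (simp add: ennreal_mult')
  finally have M: "measure_pmf.prob ?R E \<le> K * Gf f lam x0"
    using K0 Gf_nonneg[OF assms(2)] by (simp add: measure_pmf.emeasure_eq_measure ennreal_le_iff mult_nonneg_nonneg)
  have "Gf f lam x0 \<le> exp ((exp (- lam) - 1) * \<mu>)"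
    unfolding Gf_def mu by (rule chernoff_prod[OF _ _ assms(4,5,6,7) lam0]) (use x0box in auto)
  then have "K * Gf f lam x0 \<le> K * exp ((exp (- lam) - 1) * \<mu>)" using K0 by (rule mult_left_mono)
  also have "\<dots> \<le> exp (- (\<delta>\<^sup>2 * \<mu> / 2))"
    unfolding K_def lam_def by (rule final_real[OF assms(8,9) mu0])
  finally show ?thesis using M unfolding E_def \<mu>_def by simp
qed

end
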